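(* For $p\in(0,1]$ let $\varphi(p)=\big(1-(3-2\sqrt2)p\big)^{\frac2p}\big(1-\frac p2\big)^{\frac2p-1}$. Then $\varphi$ is monotonically increasing on $(0,1]$. *)

theory Defs
  imports Complex_Main
begin

definition phi :: "real \<Rightarrow> real" where
  "phi p = (1 - (3 - 2 * sqrt 2) * p) powr (2 / p) * (1 - p / 2) powr (2 / p - 1)"

end

theory Submission
  imports Defs
begin

definition cc :: real where "cc = 3 - 2 * sqrt 2"

lemma cc_props: "0 < cc" "cc < 1" "(1 - cc)^2 = 4 * cc"
proof -
  have s: "sqrt 2 * sqrt 2 = (2::real)" by simp
  have a: "sqrt 2 < (3/2::real)" by (rule real_less_lsqrt) (auto simp: power2_eq_square)
  have b: "sqrt 2 > (1::real)" by simp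
  show "0 < cc" using a by (simp add: cc_def)
  show "cc < 1" using b by (simp add: cc_def)
  show "(1 - cc)^2 = 4 * cc" unfolding cc_def power2_eq_square
    by (simp add: algebra_simps s)
qed

definition g :: "real \<Rightarrow> real" where "g p = ln (1 - cc*p) + ln (1 - p/2)"
definition g' :: "real \<Rightarrow> real" where "g' p = - cc/(1 - cc*p) - 1/(2 - p)"
definition h :: "real \<Rightarrow> real" where "h p = p * g' p - g p + p^2/(2*(2-p))"
definition f :: "real \<Rightarrow> real" where "f p = 2 * g p / p - ln (1 - p/2)"

lemma pos1: "0 \<le> p \<Longrightarrow> p \<le> 1 \<Longrightarrow> 1 - cc*p > 0"
proof -
  assume "0 \<le> p" "p \<le> 1"
  hence "cc*p \<le> cc" using cc_props by (simp add: mult_left_le)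
  thus ?thesis using cc_props by linarith
qed

lemma key: "0 \<le> p \<Longrightarrow> p \<le> 1 \<Longrightarrow> cc^2 * (2*(2-p)) \<le> (1 - cc*p)^2"
proof -
  assume p: "0 \<le> p" "p \<le> 1"
  have "cc*p \<le> cc" using cc_props p by (simp add: mult_left_le)
  hence "(1-cc)^2 \<le> (1 - cc*p)^2" using cc_props
    by (intro power_mono) auto
  moreover have "cc^2 * (2*(2-p)) \<le> 4*cc^2" using p cc_props by auto
  moreover have "4*cc^2 \<le> 4*cc" using cc_props by (simp add: power2_eq_square)
  ultimately show ?thesis using cc_props by linarith
qed

lemma g_deriv: "0 \<le> p \<Longrightarrow> p \<le> 1 \<Longrightarrow> (g has_real_derivative g' p) (at p)"
proof -
  assume p: "0 \<le> p" "p \<le> 1"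
  have q: "1 - cc*p > 0" using pos1 p by auto
  have r: "2 - p > 0" using p by auto
  show ?thesis unfolding g_def[abs_def] g'_def
    using q r by (auto intro!: derivative_eq_intros simp: field_simps)
qed

lemma h_deriv: "0 \<le> p \<Longrightarrow> p \<le> 1 \<Longrightarrow>
   (h has_real_derivative p * (1/(2*(2-p)) - cc^2/(1-cc*p)^2)) (at p)"
proof -
  assume p: "0 \<le> p" "p \<le> 1"
  have q: "1 - cc*p > 0" using pos1 p by auto
  have r: "2 - p > 0" "4 - 2*p \<noteq> 0" using p by auto
  have d2: "(g' has_real_derivative (- (cc^2/(1-cc*p)^2) - 1/(2-p)^2)) (at p)"
    unfolding g'_def[abs_def] using q r
    by (auto intro!: derivative_eq_intros simp: power2_eq_square)
  have d3: "((\<lambda>x. x^2/(2*(2-x))) has_real_derivative ((4*p-p^2)/(2*(2-p)^2))) (at p)"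
  proof -
    have e: "(2 * p * (4 - 2 * p) + p^2 * 2) / ((4 - 2 * p) * (4 - 2 * p)) = (4*p-p^2)/(2*(2-p)^2)"
    proof -
      have "(4 - 2 * p) * (4 - 2 * p) = 4 * (2-p)^2" by (simp add: power2_eq_square algebra_simps)
      moreover have "2 * p * (4 - 2 * p) + p^2 * 2 = 2 * (4*p-p^2)" by (simp add: power2_eq_square algebra_simps)
      ultimately show ?thesis by (simp only:)
    qed
    show ?thesis
      by (rule DERIV_cong[OF _ e]) (use r in \<open>auto intro!: derivative_eq_intros\<close>)
  qed
  have "(h has_real_derivative (1 * g' p + (- (cc^2/(1-cc*p)^2) - 1/(2-p)^2) * p) - g' p + (4*p-p^2)/(2*(2-p)^2)) (at p)"
    unfolding h_def[abs_def]
    by (intro DERIV_add DERIV_diff DERIV_mult DERIV_ident d2 d3 g_deriv p)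
  moreover have "(1 * g' p + (- (cc^2/(1-cc*p)^2) - 1/(2-p)^2) * p) - g' p + (4*p-p^2)/(2*(2-p)^2)
     = p * (1/(2*(2-p)) - cc^2/(1-cc*p)^2)"
  proof -
    define u where "u = 2 - p"
    have u: "u \<noteq> 0" "p = 2 - u" using r by (auto simp: u_def)
    have "(4*p-p^2)/(2*(2-p)^2) - p/(2-p)^2 = p/(2*(2-p))"
      unfolding u_def[symmetric] using u by (simp add: field_simps power2_eq_square) (simp add: u(2) algebra_simps)
    thus ?thesis by (simp add: algebra_simps)
  qed
  ultimately show ?thesis by simp
qed

lemma h_nonneg: "0 \<le> p \<Longrightarrow> p \<le> 1 \<Longrightarrow> h p \<ge> 0"
proof -
  assume p: "0 \<le> p" "p \<le> 1"
  have "h 0 \<le> h p"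
  proof (rule DERIV_nonneg_imp_nondecreasing[OF p(1)])
    fix x assume x: "0 \<le> x" "x \<le> p"
    have q: "1 - cc*x > 0" using pos1 x p by auto
    have r: "2 - x > 0" using x p by auto
    have "cc^2 * (2*(2-x)) \<le> (1 - cc*x)^2" using key x p by auto
    hence "cc^2/(1-cc*x)^2 \<le> 1/(2*(2-x))" using q r
      by (simp add: field_simps)
    hence "x * (1/(2*(2-x)) - cc^2/(1-cc*x)^2) \<ge> 0" using x by simp
    thus "\<exists>y. (h has_real_derivative y) (at x) \<and> 0 \<le> y"
      using h_deriv x p by (meson order_trans)
  qed
  moreover have "h 0 = 0" by (simp add: h_def g_def)
  ultimately show ?thesis by simp
qed

lemma f_deriv: "0 < p \<Longrightarrow> p \<le> 1 \<Longrightarrow> (f has_real_derivative 2 * h p / p^2) (at p)"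
proof -
  assume p: "0 < p" "p \<le> 1"
  have r: "2 - p > 0" using p by auto
  have d1: "((\<lambda>x. 2 * g x / x) has_real_derivative ((2 * g' p) * p - 2 * g p * 1)/(p*p)) (at p)"
    using p by (intro DERIV_divide DERIV_cmult g_deriv DERIV_ident) auto
  have d2: "((\<lambda>x. ln (1 - x/2)) has_real_derivative (- (1/(2-p)))) (at p)"
    using r by (auto intro!: derivative_eq_intros simp: field_simps)
  have "(f has_real_derivative ((2 * g' p) * p - 2 * g p * 1)/(p*p) - (- (1/(2-p)))) (at p)"
    unfolding f_def[abs_def] by (intro DERIV_diff d1 d2)
  moreover have "((2 * g' p) * p - 2 * g p * 1)/(p*p) - (- (1/(2-p))) = 2 * h p / p^2"
    unfolding h_def using p r by (simp add: field_simps power2_eq_square)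
  ultimately show ?thesis by simp
qed

lemma f_mono: "0 < x \<Longrightarrow> x \<le> y \<Longrightarrow> y \<le> 1 \<Longrightarrow> f x \<le> f y"
proof -
  assume xy: "0 < x" "x \<le> y" "y \<le> 1"
  show ?thesis
  proof (rule DERIV_nonneg_imp_nondecreasing[OF xy(2)])
    fix t assume t: "x \<le> t" "t \<le> y"
    have "2 * h t / t^2 \<ge> 0" using h_nonneg[of t] t xy by simp
    thus "\<exists>d. (f has_real_derivative d) (at t) \<and> 0 \<le> d"
      using f_deriv[of t] t xy by auto
  qed
qed

lemma phi_f: "0 < p \<Longrightarrow> p \<le> 1 \<Longrightarrow> phi p = exp (f p)"
proof -
  assume p: "0 < p" "p \<le> 1"
  have q: "1 - cc*p > 0" using pos1 p by auto
  have r: "1 - p/2 > 0" using p by auto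
  have "phi p = exp (2/p * ln (1 - cc*p)) * exp ((2/p - 1) * ln (1 - p/2))"
    unfolding phi_def powr_def cc_def[symmetric] using q r by simp
  also have "\<dots> = exp (2/p * ln (1 - cc*p) + (2/p - 1) * ln (1 - p/2))"
    by (simp add: exp_add)
  also have "2/p * ln (1 - cc*p) + (2/p - 1) * ln (1 - p/2) = f p"
    unfolding f_def g_def using p by (simp add: field_simps)
  finally show ?thesis .
qed

theorem lemma11:
  shows "mono_on {0<..1} phi"
proof (rule mono_onI)
  fix x y :: real assume "x \<in> {0<..1}" "y \<in> {0<..1}" "x \<le> y"
  thus "phi x \<le> phi y" using phi_f f_mono by auto
qed

end
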